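(* Let $m>1$, $h>0$, $\Delta t>0$, let $M^*,S^*\in\mathbb{R}^{(m-1)\times(m-1)}$ be symmetric matrices and let $F\in\mathbb{R}^{m-1}$ be independent of time. Let $(U^n,\dot U^n,\ddot U^n)_{n\ge0}$ be sequences in $\mathbb{R}^{m-1}$ satisfying, for all $n\ge0$, the hybrid scheme $$U^{n+1}=U^n+\tfrac{\Delta t}{2}(\dot U^{n+1}+\dot U^n),\qquad \dot U^{n+1}=\dot U^n+\tfrac{\Delta t}{2}(\ddot U^{n+1}+\ddot U^n),$$ $$M^*\ddot U^{n+\frac12}+S^*U^{n+\frac12}=F+\frac{H(-u_1^n)}{2h}(u_1^n+u_1^{n+1})^+e_1+\frac{H(u_1^n)}{2h}\big((u_1^n)^++(u_1^{n+1})^+\big)e_1,$$ where $V^{n+\frac12}=\frac12(V^{n+1}+V^n)$, $u_1^n$ is the first component of $U^n$, $e_1=(1,0,\dots,0)^{\mathsf T}$, $s^+=\max(s,0)$, and $H(s)=1$ if $s>0$, $H(0)=\tfrac12$, $H(s)=0$ if $s<0$. Define the discrete energy $$\mathcal{E}^n=\tfrac12(\dot U^n)^{\mathsf T}M^*\dot U^n+\tfrac12(U^n)^{\mathsf T}S^*U^n-\tfrac1{2h}\big((u_1^n)^+\big)^2-(U^n)^{\mathsf T}F .$$ Then $\Delta\mathcal{E}^n:=\mathcal{E}^{n+1}-\mathcal{E}^n\le0$ for all $n>0$.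
   Context: In the paper, $M^*$ and $S^*$ are the (symmetric) reduced mass and stiffness matrices of a mass-redistributed $P_1$ finite element discretization of the 1D wave equation with a Signorini contact condition, the contact node having been eliminated; the claim only uses their symmetry. *)

theory Defs
  imports Main "HOL-Analysis.Analysis"
begin

text \<open>Vectors in R^(m-1) are represented as functions nat => real with index set {..<m-1};
 index 0 is the first component. Matrices are nat => nat => real.\<close>

definition pos_part :: "real \<Rightarrow> real" where
  "pos_part s = max s 0"

definition heaviside :: "real \<Rightarrow> real" where
  "heaviside s = (if s > 0 then 1 else if s = 0 then 1/2 else 0)"

definition mat_vec :: "nat \<Rightarrow> (nat \<Rightarrow> nat \<Rightarrow> real) \<Rightarrow> (nat \<Rightarrow> real) \<Rightarrow> nat \<Rightarrow> real" where
  "mat_vec d A x i = (\<Sum>j<d. A i j * x j)"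

definition dotp :: "nat \<Rightarrow> (nat \<Rightarrow> real) \<Rightarrow> (nat \<Rightarrow> real) \<Rightarrow> real" where
  "dotp d x y = (\<Sum>i<d. x i * y i)"

definition quad_form :: "nat \<Rightarrow> (nat \<Rightarrow> nat \<Rightarrow> real) \<Rightarrow> (nat \<Rightarrow> real) \<Rightarrow> real" where
  "quad_form d A x = dotp d x (mat_vec d A x)"

definition symmetric_mat :: "nat \<Rightarrow> (nat \<Rightarrow> nat \<Rightarrow> real) \<Rightarrow> bool" where
  "symmetric_mat d A \<longleftrightarrow> (\<forall>i<d. \<forall>j<d. A i j = A j i)"

definition disc_energy ::
  "nat \<Rightarrow> real \<Rightarrow> (nat \<Rightarrow> nat \<Rightarrow> real) \<Rightarrow> (nat \<Rightarrow> nat \<Rightarrow> real) \<Rightarrow> (nat \<Rightarrow> real)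
   \<Rightarrow> (nat \<Rightarrow> real) \<Rightarrow> (nat \<Rightarrow> real) \<Rightarrow> real" where
  "disc_energy d h M S F U Ud =
     quad_form d M Ud / 2 + quad_form d S U / 2 - (pos_part (U 0))\<^sup>2 / (2 * h) - dotp d U F"

end

theory Submission
  imports Defs
begin

lemma dotp_cong: "(\<And>i. i < d \<Longrightarrow> x i = x' i) \<Longrightarrow> (\<And>i. i < d \<Longrightarrow> y i = y' i) \<Longrightarrow> dotp d x y = dotp d x' y'"
  unfolding dotp_def by (rule sum.cong) auto

lemma mat_vec_cong: "(\<And>i. i < d \<Longrightarrow> x i = x' i) \<Longrightarrow> mat_vec d A x k = mat_vec d A x' k"
  unfolding mat_vec_def by (rule sum.cong) auto

lemma dotp_sym_mat:
  assumes "symmetric_mat d A"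
  shows "dotp d x (mat_vec d A y) = dotp d y (mat_vec d A x)"
proof -
  have "dotp d x (mat_vec d A y) = (\<Sum>i<d. \<Sum>j<d. x i * A i j * y j)"
    unfolding dotp_def mat_vec_def by (simp add: sum_distrib_left mult.assoc)
  also have "\<dots> = (\<Sum>j<d. \<Sum>i<d. x i * A i j * y j)" by (rule sum.swap)
  also have "\<dots> = (\<Sum>j<d. \<Sum>i<d. y j * A j i * x i)"
    using assms unfolding symmetric_mat_def by (intro sum.cong refl) (auto simp: mult_ac)
  also have "\<dots> = dotp d y (mat_vec d A x)"
    unfolding dotp_def mat_vec_def by (simp add: sum_distrib_left mult.assoc)
  finally show ?thesis .
qed

lemma mat_vec_add: "mat_vec d A (\<lambda>j. x j + y j) k = mat_vec d A x k + mat_vec d A y k"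
  unfolding mat_vec_def by (simp add: algebra_simps sum.distrib)

lemma mat_vec_scale: "mat_vec d A (\<lambda>j. c * x j) k = c * mat_vec d A x k"
  unfolding mat_vec_def by (simp add: sum_distrib_left mult_ac)

lemma dotp_add1: "dotp d (\<lambda>j. x j + y j) z = dotp d x z + dotp d y z"
  unfolding dotp_def by (simp add: algebra_simps sum.distrib)
lemma dotp_sub1: "dotp d (\<lambda>j. x j - y j) z = dotp d x z - dotp d y z"
  unfolding dotp_def by (simp add: algebra_simps sum_subtractf)
lemma dotp_add2: "dotp d z (\<lambda>j. x j + y j) = dotp d z x + dotp d z y"
  unfolding dotp_def by (simp add: algebra_simps sum.distrib)
lemma dotp_scale1: "dotp d (\<lambda>j. c * x j) z = c * dotp d x z"
  unfolding dotp_def by (simp add: sum_distrib_left mult_ac)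

lemma quad_diff:
  assumes "symmetric_mat d A"
  shows "quad_form d A x - quad_form d A y = dotp d (\<lambda>i. x i + y i) (mat_vec d A (\<lambda>i. x i - y i))"
proof -
  have "dotp d (\<lambda>i. x i + y i) (mat_vec d A (\<lambda>i. x i - y i))
     = dotp d x (mat_vec d A (\<lambda>i. x i - y i)) + dotp d y (mat_vec d A (\<lambda>i. x i - y i))"
    by (rule dotp_add1)
  also have "dotp d x (mat_vec d A (\<lambda>i. x i - y i)) = dotp d (\<lambda>i. x i - y i) (mat_vec d A x)"
    by (rule dotp_sym_mat[OF assms])
  also have "dotp d y (mat_vec d A (\<lambda>i. x i - y i)) = dotp d (\<lambda>i. x i - y i) (mat_vec d A y)"
    by (rule dotp_sym_mat[OF assms])
  finally show ?thesis
    using dotp_sym_mat[OF assms, of x y]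
    unfolding quad_form_def dotp_sub1 by simp
qed

lemma contact_ineq:
  assumes "h > 0"
  shows "(a - b) * (heaviside (- b) / (2 * h) * pos_part (b + a)
            + heaviside b / (2 * h) * (pos_part b + pos_part a))
         - ((pos_part a)\<^sup>2 - (pos_part b)\<^sup>2) / (2 * h) \<le> 0"
proof -
  have "(a - b) * (heaviside (- b) * pos_part (b + a) + heaviside b * (pos_part b + pos_part a))
         - ((pos_part a)\<^sup>2 - (pos_part b)\<^sup>2) \<le> 0"
  proof (cases "b > 0")
    case True
    then show ?thesis unfolding heaviside_def pos_part_def
      by (cases "a > 0") (auto simp: max_def power2_eq_square algebra_simps mult_nonpos_nonneg)
  next
    case False
    show ?thesis
    proof (cases "b = 0")
      case True
      then show ?thesis unfolding heaviside_def pos_part_def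
        by (auto simp: max_def power2_eq_square algebra_simps)
    next
      case False
      with \<open>\<not> b > 0\<close> have "b < 0" by simp
      then show ?thesis unfolding heaviside_def pos_part_def
        by (cases "a + b > 0"; cases "a > 0") (auto simp: max_def power2_eq_square algebra_simps)
    qed
  qed
  moreover have "(a - b) * (heaviside (- b) / (2 * h) * pos_part (b + a)
            + heaviside b / (2 * h) * (pos_part b + pos_part a))
         - ((pos_part a)\<^sup>2 - (pos_part b)\<^sup>2) / (2 * h)
     = ((a - b) * (heaviside (- b) * pos_part (b + a) + heaviside b * (pos_part b + pos_part a))
         - ((pos_part a)\<^sup>2 - (pos_part b)\<^sup>2)) / (2 * h)"
    using assms by (simp add: field_simps)
  ultimately show ?thesis using assms by (simp add: divide_nonpos_pos)
qed

lemma dotp_scale2: "dotp d z (\<lambda>j. c * x j) = c * dotp d z x"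
  unfolding dotp_def by (simp add: sum_distrib_left mult_ac)

lemma dotp_e0:
  assumes "0 < d"
  shows "dotp d x (\<lambda>i. F i + (if i = 0 then R else 0)) = dotp d x F + x 0 * R"
proof -
  have "dotp d x (\<lambda>i. if i = 0 then R else 0) = (\<Sum>i<d. if i = 0 then x i * R else 0)"
    unfolding dotp_def by (intro sum.cong) auto
  also have "\<dots> = x 0 * R" using assms by (simp add: sum.delta)
  finally show ?thesis by (simp add: dotp_add2)
qed

theorem lemma5p1:
  fixes m :: nat and h dt :: real
    and M S :: "nat \<Rightarrow> nat \<Rightarrow> real" and F :: "nat \<Rightarrow> real"
    and U Ud Udd :: "nat \<Rightarrow> nat \<Rightarrow> real"
  assumes "m > 1" and "h > 0" and "dt > 0"
    and "symmetric_mat (m - 1) M" and "symmetric_mat (m - 1) S"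
    and upd_U: "\<And>n i. i < m - 1 \<Longrightarrow> U (Suc n) i = U n i + dt / 2 * (Ud (Suc n) i + Ud n i)"
    and upd_Ud: "\<And>n i. i < m - 1 \<Longrightarrow> Ud (Suc n) i = Ud n i + dt / 2 * (Udd (Suc n) i + Udd n i)"
    and eqn: "\<And>n i. i < m - 1 \<Longrightarrow>
       mat_vec (m - 1) M (\<lambda>j. (Udd (Suc n) j + Udd n j) / 2) i
       + mat_vec (m - 1) S (\<lambda>j. (U (Suc n) j + U n j) / 2) i
       = F i + (if i = 0 then
            heaviside (- U n 0) / (2 * h) * pos_part (U n 0 + U (Suc n) 0)
            + heaviside (U n 0) / (2 * h) * (pos_part (U n 0) + pos_part (U (Suc n) 0))
          else 0)"
  shows "\<forall>n>0. disc_energy (m - 1) h M S F (U (Suc n)) (Ud (Suc n))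
               - disc_energy (m - 1) h M S F (U n) (Ud n) \<le> 0"
proof (intro allI impI)
  fix n :: nat
  define d where "d = m - 1"
  have d0: "0 < d" using assms(1) unfolding d_def by simp
  define a where "a = U (Suc n)"
  define b where "b = U n"
  define va where "va = Ud (Suc n)"
  define vb where "vb = Ud n"
  define Mh where "Mh = mat_vec d M (\<lambda>j. (Udd (Suc n) j + Udd n j) / 2)"
  define Sh where "Sh = mat_vec d S (\<lambda>j. (a j + b j) / 2)"
  define R where "R = heaviside (- b 0) / (2 * h) * pos_part (b 0 + a 0)
            + heaviside (b 0) / (2 * h) * (pos_part (b 0) + pos_part (a 0))"
  have symM: "symmetric_mat d M" and symS: "symmetric_mat d S" using assms(4,5) d_def by auto
  have ab: "\<And>i. i < d \<Longrightarrow> a i - b i = dt / 2 * (va i + vb i)"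
    using upd_U unfolding a_def b_def va_def vb_def d_def by simp
  have vab: "\<And>i. i < d \<Longrightarrow> va i - vb i = dt * ((Udd (Suc n) i + Udd n i) / 2)"
    using upd_Ud unfolding va_def vb_def d_def by simp
  have MS: "\<And>i. i < d \<Longrightarrow> Mh i + Sh i = F i + (if i = 0 then R else 0)"
    using eqn unfolding Mh_def Sh_def R_def a_def b_def d_def by simp
  have e1: "quad_form d M va - quad_form d M vb = dt * dotp d (\<lambda>i. va i + vb i) Mh"
  proof -
    have "quad_form d M va - quad_form d M vb = dotp d (\<lambda>i. va i + vb i) (mat_vec d M (\<lambda>i. va i - vb i))"
      by (rule quad_diff[OF symM])
    also have "\<dots> = dotp d (\<lambda>i. va i + vb i) (\<lambda>k. dt * Mh k)"
      unfolding Mh_def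
    proof (intro dotp_cong refl)
      fix k
      have "mat_vec d M (\<lambda>i. va i - vb i) k
          = mat_vec d M (\<lambda>i. dt * ((Udd (Suc n) i + Udd n i) / 2)) k"
        by (rule mat_vec_cong) (rule vab)
      also have "\<dots> = dt * mat_vec d M (\<lambda>i. (Udd (Suc n) i + Udd n i) / 2) k"
        by (rule mat_vec_scale)
      finally show "mat_vec d M (\<lambda>i. va i - vb i) k = dt * mat_vec d M (\<lambda>j. (Udd (Suc n) j + Udd n j) / 2) k" .
    qed
    finally show ?thesis by (simp add: dotp_scale2)
  qed
  have e1': "(quad_form d M va - quad_form d M vb) / 2 = dotp d (\<lambda>i. a i - b i) Mh"
  proof -
    have "dotp d (\<lambda>i. a i - b i) Mh = dotp d (\<lambda>i. dt / 2 * (va i + vb i)) Mh"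
      by (intro dotp_cong) (auto simp: ab)
    also have "\<dots> = dt / 2 * dotp d (\<lambda>i. va i + vb i) Mh" by (rule dotp_scale1)
    finally show ?thesis using e1 by simp
  qed
  have e2': "(quad_form d S a - quad_form d S b) / 2 = dotp d (\<lambda>i. a i - b i) Sh"
  proof -
    have "quad_form d S a - quad_form d S b = dotp d (\<lambda>i. a i + b i) (mat_vec d S (\<lambda>i. a i - b i))"
      by (rule quad_diff[OF symS])
    also have "\<dots> = dotp d (\<lambda>i. a i - b i) (mat_vec d S (\<lambda>i. a i + b i))"
      by (rule dotp_sym_mat[OF symS])
    also have "mat_vec d S (\<lambda>i. a i + b i) = (\<lambda>k. 2 * Sh k)"
    proof
      fix k
      have "Sh k = mat_vec d S (\<lambda>j. (1/2) * (a j + b j)) k" unfolding Sh_def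
        by (intro mat_vec_cong) simp
      also have "\<dots> = (1/2) * mat_vec d S (\<lambda>j. a j + b j) k" by (rule mat_vec_scale)
      finally show "mat_vec d S (\<lambda>i. a i + b i) k = 2 * Sh k" by simp
    qed
    finally show ?thesis by (simp add: dotp_scale2)
  qed
  have sum: "dotp d (\<lambda>i. a i - b i) Mh + dotp d (\<lambda>i. a i - b i) Sh
        = dotp d (\<lambda>i. a i - b i) F + (a 0 - b 0) * R"
  proof -
    have "dotp d (\<lambda>i. a i - b i) Mh + dotp d (\<lambda>i. a i - b i) Sh
        = dotp d (\<lambda>i. a i - b i) (\<lambda>i. Mh i + Sh i)" by (simp add: dotp_add2)
    also have "\<dots> = dotp d (\<lambda>i. a i - b i) (\<lambda>i. F i + (if i = 0 then R else 0))"
      by (intro dotp_cong) (auto simp: MS)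
    also have "\<dots> = dotp d (\<lambda>i. a i - b i) F + (a 0 - b 0) * R" by (rule dotp_e0[OF d0])
    finally show ?thesis .
  qed
  have "disc_energy d h M S F a va - disc_energy d h M S F b vb
     = (quad_form d M va - quad_form d M vb) / 2 + (quad_form d S a - quad_form d S b) / 2
       - ((pos_part (a 0))\<^sup>2 - (pos_part (b 0))\<^sup>2) / (2 * h) - dotp d (\<lambda>i. a i - b i) F"
    unfolding disc_energy_def dotp_sub1 using assms(2) by (simp add: field_simps)
  also have "\<dots> = (a 0 - b 0) * R - ((pos_part (a 0))\<^sup>2 - (pos_part (b 0))\<^sup>2) / (2 * h)"
    using e1' e2' sum by simp
  also have "\<dots> \<le> 0" unfolding R_def using contact_ineq[OF assms(2)] by simp
  finally show "disc_energy (m - 1) h M S F (U (Suc n)) (Ud (Suc n))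
               - disc_energy (m - 1) h M S F (U n) (Ud n) \<le> 0"
    unfolding d_def a_def b_def va_def vb_def .
qed

end
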